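(* Let $(\boldsymbol u^{n},p^{n},\boldsymbol J^{n},\phi^{n},q^{n})_{0\le n\le N}$ be the solution of the first-order scheme (S1), with $\boldsymbol u^0\in\boldsymbol V$, $\boldsymbol J^0\in\boldsymbol L^2(\Omega)$, $q^0=1$. Then there are constants $k_1,k_2>0$ independent of $\tau$ such that for all $0\le m\le N$, $$\|\boldsymbol u^{m}\|^2+|q^{m}|^2\le k_1,\qquad \tau\sum_{n=0}^{m}\Big(R_e^{-1}\|\nabla\boldsymbol u^{n}\|^2+\kappa\|\boldsymbol J^{n}\|^2+\frac1T|q^{n}|^2\Big)\le k_2 .$$
   Context: Let $\Omega\subset\mathbb{R}^d$ ($d=2,3$) be a bounded Lipschitz domain with boundary $\Gamma$ and unit outer normal $\boldsymbol n$. $(\cdot,\cdot)$ and $\|\cdot\|$ denote the $L^2(\Omega)$ inner product and norm. $\boldsymbol X=\boldsymbol H_0^1(\Omega)$, $\boldsymbol V=\{\boldsymbol v\in\boldsymbol X:\nabla\cdot\boldsymbol v=0\}$, $Y=S=L_0^2(\Omega)$ (square-integrable functions with zero mean), $\boldsymbol D=\boldsymbol H_0(\mathrm{div},\Omega)$ (square-integrable fields with square-integrable divergence and vanishing normal trace on $\Gamma$). $b(\boldsymbol u,\boldsymbol v,\boldsymbol w)=((\boldsymbol u\cdot\nabla)\boldsymbol v,\boldsymbol w)$. Cross products: for $d=3$ the usual one; for $d=2$ planar fields are identified with $\mathbb R^3$-valued fields with vanishing third component, magnetic fields are $\mathbb R^3$-valued, and $\boldsymbol a\times\boldsymbol B$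 denotes the first two components of the cross product in $\mathbb R^3$. Parameters $R_e>0$, $\kappa>0$, $T>0$; $N\in\mathbb N$, $\tau=T/N$, $t^n=n\tau$; $\delta_t v^{n+1}=(v^{n+1}-v^n)/\tau$. Given magnetic fields $\boldsymbol B^{n}\in L^3(\Omega)^3$, $n\ge1$. Scheme (S1): given $\boldsymbol u^0\in\boldsymbol V$, $\boldsymbol J^0\in\boldsymbol L^2(\Omega)$, $q^0=1$, for each $n\ge0$ find $(\boldsymbol u^{n+1},p^{n+1},\boldsymbol J^{n+1},\phi^{n+1},q^{n+1})\in\boldsymbol X\times Y\times\boldsymbol D\times S\times\mathbb R$ such that for all $(\boldsymbol v,r,\boldsymbol K,\psi)\in\boldsymbol X\times Y\times\boldsymbol D\times S$: \begin{align*} &(\delta_t\boldsymbol u^{n+1},\boldsymbol v)+R_e^{-1}(\nabla\boldsymbol u^{n+1},\nabla\boldsymbol v)-(p^{n+1},\nabla\cdot\boldsymbol v)+q^{n+1}e^{t^{n+1}/T}\big(b(\boldsymbol u^n,\boldsymbol u^n,\boldsymbol v)-\kappa(\boldsymbol J^n\times\boldsymbol B^{n+1},\boldsymbol v)\big)=0,\\ &(\nabla\cdot\boldsymbol u^{n+1},r)=0,\\ &(\boldsymbol J^{n+1},\boldsymbol K)-(\phi^{n+1},\nabla\cdot\boldsymbol K)-q^{n+1}e^{t^{n+1}/T}(\boldsymbol u^n\times\boldsymbol B^{n+1},\boldsymbol K)=0,\\ &(\nabla\cdot\boldsymbol J^{n+1},\psi)=0,\\ &\delta_t q^{n+1}+\frac{q^{n+1}}{T}-e^{t^{n+1}/T}\big(b(\boldsymbol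 u^n,\boldsymbol u^n,\boldsymbol u^{n+1})-\kappa(\boldsymbol u^n\times\boldsymbol B^{n+1},\boldsymbol J^{n+1})-\kappa(\boldsymbol J^n\times\boldsymbol B^{n+1},\boldsymbol u^{n+1})\big)=0. \end{align*} *)

theory Defs
  imports "HOL-Analysis.Analysis"
begin

text \<open>Functions on the domain are total functions on real^'d; only their
values on the domain matter (all integrals are taken w.r.t. lebesgue_on Omega).\<close>

definition lipschitz_domain :: "(real^'d) set \<Rightarrow> bool" where
  "lipschitz_domain \<Omega> \<longleftrightarrow> open \<Omega> \<and> connected \<Omega> \<and> bounded \<Omega> \<and> \<Omega> \<noteq> {} \<and>
     (\<forall>x0 \<in> frontier \<Omega>. \<exists>r>0. \<exists>e::real^'d. norm e = 1 \<and>
        (\<exists>C g. C-lipschitz_on {z. z \<bullet> e = 0} g \<and>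
           \<Omega> \<inter> ball x0 r = {y \<in> ball x0 r. y \<bullet> e < g (y - (y \<bullet> e) *\<^sub>R e)}))"

definition pd :: "'d \<Rightarrow> (real^'d \<Rightarrow> real) \<Rightarrow> real^'d \<Rightarrow> real" where
  "pd i f x = vector_derivative (\<lambda>t. f (x + t *\<^sub>R axis i 1)) (at 0)"

fun iter_pd :: "'d list \<Rightarrow> (real^'d \<Rightarrow> real) \<Rightarrow> real^'d \<Rightarrow> real" where
  "iter_pd [] f = f"
| "iter_pd (i # is) f = pd i (iter_pd is f)"

definition smooth_fun :: "(real^'d \<Rightarrow> real) \<Rightarrow> bool" where
  "smooth_fun f \<longleftrightarrow> (\<forall>is x. iter_pd is f differentiable (at x))"

definition tsupport :: "(real^'d \<Rightarrow> real) \<Rightarrow> (real^'d) set" where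
  "tsupport f = closure {x. f x \<noteq> 0}"

definition test_fun :: "(real^'d) set \<Rightarrow> (real^'d \<Rightarrow> real) \<Rightarrow> bool" where
  "test_fun \<Omega> f \<longleftrightarrow> smooth_fun f \<and> compact (tsupport f) \<and> tsupport f \<subseteq> \<Omega>"

definition test_field :: "(real^'d) set \<Rightarrow> (real^'d \<Rightarrow> real^'d) \<Rightarrow> bool" where
  "test_field \<Omega> f \<longleftrightarrow> (\<forall>i. test_fun \<Omega> (\<lambda>x. f x $ i))"

text \<open>classical gradient and Jacobian (Jac $ i $ j = d_j f_i)\<close>
definition cgrad :: "(real^'d \<Rightarrow> real) \<Rightarrow> real^'d \<Rightarrow> real^'d" where
  "cgrad f x = (\<chi> j. pd j f x)"

definition cjac :: "(real^'d \<Rightarrow> real^'d) \<Rightarrow> real^'d \<Rightarrow> real^'d^'d" where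
  "cjac f x = (\<chi> i. cgrad (\<lambda>y. f y $ i) x)"

definition Lp :: "real \<Rightarrow> (real^'d) set \<Rightarrow> (real^'d \<Rightarrow> 'a::real_normed_vector) \<Rightarrow> bool" where
  "Lp p \<Omega> f \<longleftrightarrow> f \<in> borel_measurable (lebesgue_on \<Omega>) \<and>
     integrable (lebesgue_on \<Omega>) (\<lambda>x. norm (f x) powr p)"

definition ip :: "(real^'d) set \<Rightarrow> (real^'d \<Rightarrow> 'a::real_inner) \<Rightarrow> (real^'d \<Rightarrow> 'a) \<Rightarrow> real" where
  "ip \<Omega> f g = (\<integral>x. f x \<bullet> g x \<partial>lebesgue_on \<Omega>)"

definition nrm2 :: "(real^'d) set \<Rightarrow> (real^'d \<Rightarrow> 'a::real_normed_vector) \<Rightarrow> real" where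
  "nrm2 \<Omega> f = (\<integral>x. (norm (f x))\<^sup>2 \<partial>lebesgue_on \<Omega>)"

definition is_wgrad :: "(real^'d) set \<Rightarrow> (real^'d \<Rightarrow> real) \<Rightarrow> (real^'d \<Rightarrow> real^'d) \<Rightarrow> bool" where
  "is_wgrad \<Omega> f G \<longleftrightarrow> (\<forall>\<phi> i. test_fun \<Omega> \<phi> \<longrightarrow>
      integrable (lebesgue_on \<Omega>) (\<lambda>x. f x * pd i \<phi> x) \<and>
      integrable (lebesgue_on \<Omega>) (\<lambda>x. G x $ i * \<phi> x) \<and>
      (\<integral>x. f x * pd i \<phi> x \<partial>lebesgue_on \<Omega>) = - (\<integral>x. G x $ i * \<phi> x \<partial>lebesgue_on \<Omega>))"

definition wgrad :: "(real^'d) set \<Rightarrow> (real^'d \<Rightarrow> real) \<Rightarrow> real^'d \<Rightarrow> real^'d" where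
  "wgrad \<Omega> f = (SOME G. is_wgrad \<Omega> f G)"

definition is_wjac :: "(real^'d) set \<Rightarrow> (real^'d \<Rightarrow> real^'d) \<Rightarrow> (real^'d \<Rightarrow> real^'d^'d) \<Rightarrow> bool" where
  "is_wjac \<Omega> u Du \<longleftrightarrow> (\<forall>i. is_wgrad \<Omega> (\<lambda>x. u x $ i) (\<lambda>x. Du x $ i))"

text \<open>weak Jacobian, wjac u x $ i $ j = d_j u_i  (this is nabla u)\<close>
definition wjac :: "(real^'d) set \<Rightarrow> (real^'d \<Rightarrow> real^'d) \<Rightarrow> real^'d \<Rightarrow> real^'d^'d" where
  "wjac \<Omega> u = (SOME Du. is_wjac \<Omega> u Du)"

definition is_wdiv :: "(real^'d) set \<Rightarrow> (real^'d \<Rightarrow> real^'d) \<Rightarrow> (real^'d \<Rightarrow> real) \<Rightarrow> bool" where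
  "is_wdiv \<Omega> J D \<longleftrightarrow> (\<forall>\<phi>. test_fun \<Omega> \<phi> \<longrightarrow>
      integrable (lebesgue_on \<Omega>) (\<lambda>x. J x \<bullet> cgrad \<phi> x) \<and>
      integrable (lebesgue_on \<Omega>) (\<lambda>x. D x * \<phi> x) \<and>
      (\<integral>x. J x \<bullet> cgrad \<phi> x \<partial>lebesgue_on \<Omega>) = - (\<integral>x. D x * \<phi> x \<partial>lebesgue_on \<Omega>))"

definition wdiv :: "(real^'d) set \<Rightarrow> (real^'d \<Rightarrow> real^'d) \<Rightarrow> real^'d \<Rightarrow> real" where
  "wdiv \<Omega> J = (SOME D. is_wdiv \<Omega> J D)"

definition H1s :: "(real^'d) set \<Rightarrow> (real^'d \<Rightarrow> real) \<Rightarrow> bool" where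
  "H1s \<Omega> f \<longleftrightarrow> Lp 2 \<Omega> f \<and> (\<exists>G. is_wgrad \<Omega> f G \<and> Lp 2 \<Omega> G)"

definition H1v :: "(real^'d) set \<Rightarrow> (real^'d \<Rightarrow> real^'d) \<Rightarrow> bool" where
  "H1v \<Omega> u \<longleftrightarrow> Lp 2 \<Omega> u \<and> (\<exists>Du. is_wjac \<Omega> u Du \<and> Lp 2 \<Omega> Du)"

definition Xsp :: "(real^'d) set \<Rightarrow> (real^'d \<Rightarrow> real^'d) \<Rightarrow> bool" where
  "Xsp \<Omega> u \<longleftrightarrow> H1v \<Omega> u \<and> (\<exists>\<phi>s. (\<forall>k. test_field \<Omega> (\<phi>s k)) \<and>
      (\<lambda>k. nrm2 \<Omega> (\<lambda>x. \<phi>s k x - u x) + nrm2 \<Omega> (\<lambda>x. cjac (\<phi>s k) x - wjac \<Omega> u x))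
        \<longlonglongrightarrow> 0)"

definition Vsp :: "(real^'d) set \<Rightarrow> (real^'d \<Rightarrow> real^'d) \<Rightarrow> bool" where
  "Vsp \<Omega> u \<longleftrightarrow> Xsp \<Omega> u \<and> (AE x in lebesgue_on \<Omega>. wdiv \<Omega> u x = 0)"

definition L20 :: "(real^'d) set \<Rightarrow> (real^'d \<Rightarrow> real) \<Rightarrow> bool" where
  "L20 \<Omega> f \<longleftrightarrow> Lp 2 \<Omega> f \<and> (\<integral>x. f x \<partial>lebesgue_on \<Omega>) = 0"

text \<open>D = H_0(div,Omega): H(div) fields whose normal trace vanishes, the normal
trace being the functional psi |-> (J, grad psi) + (div J, psi) on H^1(Omega).\<close>
definition Dsp :: "(real^'d) set \<Rightarrow> (real^'d \<Rightarrow> real^'d) \<Rightarrow> bool" where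
  "Dsp \<Omega> J \<longleftrightarrow> Lp 2 \<Omega> J \<and> (\<exists>D. is_wdiv \<Omega> J D \<and> Lp 2 \<Omega> D) \<and>
     (\<forall>\<psi>. H1s \<Omega> \<psi> \<longrightarrow> ip \<Omega> J (wgrad \<Omega> \<psi>) + ip \<Omega> (wdiv \<Omega> J) \<psi> = 0)"

text \<open>b(u,v,w) = ((u . nabla) v, w); ((u.nabla)v)_i = sum_j u_j d_j v_i\<close>
definition bform :: "(real^'d) set \<Rightarrow> (real^'d \<Rightarrow> real^'d) \<Rightarrow> (real^'d \<Rightarrow> real^'d) \<Rightarrow> (real^'d \<Rightarrow> real^'d) \<Rightarrow> real" where
  "bform \<Omega> u v w = ip \<Omega> (\<lambda>x. wjac \<Omega> v x *v u x) w"

text \<open>Cross product a x B for a in R^d, B in R^3: a is embedded into R^3 via the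
coordinate injection emb (d=2: vanishing remaining component), the R^3 cross product
is taken, and the result is projected back to the d coordinates.\<close>
definition embed3 :: "('d \<Rightarrow> 3) \<Rightarrow> real^'d \<Rightarrow> real^3" where
  "embed3 emb a = (\<chi> k. if k \<in> range emb then a $ (inv emb k) else 0)"

definition proj3 :: "('d \<Rightarrow> 3) \<Rightarrow> real^3 \<Rightarrow> real^'d" where
  "proj3 emb v = (\<chi> i. v $ emb i)"

definition crossd :: "('d \<Rightarrow> 3) \<Rightarrow> real^'d \<Rightarrow> real^3 \<Rightarrow> real^'d" where
  "crossd emb a B = proj3 emb (cross3 (embed3 emb a) B)"

definition scheme_S1 ::
  "(real^'d) set \<Rightarrow> ('d \<Rightarrow> 3) \<Rightarrow> real \<Rightarrow> real \<Rightarrow> real \<Rightarrow> nat \<Rightarrow> (nat \<Rightarrow> real^'d \<Rightarrow> real^3)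
   \<Rightarrow> (nat \<Rightarrow> real^'d \<Rightarrow> real^'d) \<Rightarrow> (nat \<Rightarrow> real^'d \<Rightarrow> real)
   \<Rightarrow> (nat \<Rightarrow> real^'d \<Rightarrow> real^'d) \<Rightarrow> (nat \<Rightarrow> real^'d \<Rightarrow> real) \<Rightarrow> (nat \<Rightarrow> real) \<Rightarrow> bool" where
  "scheme_S1 \<Omega> emb Rey \<kappa> T N B u p J \<phi> q \<longleftrightarrow> q 0 = 1 \<and>
    (\<forall>n<N. let \<tau> = T / real N; E = exp (real (Suc n) * \<tau> / T) in
      Xsp \<Omega> (u (Suc n)) \<and> L20 \<Omega> (p (Suc n)) \<and> Dsp \<Omega> (J (Suc n)) \<and> L20 \<Omega> (\<phi> (Suc n)) \<and>
      (\<forall>v. Xsp \<Omega> v \<longrightarrow>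
         ip \<Omega> (\<lambda>x. (1 / \<tau>) *\<^sub>R (u (Suc n) x - u n x)) v
         + (1 / Rey) * ip \<Omega> (wjac \<Omega> (u (Suc n))) (wjac \<Omega> v)
         - ip \<Omega> (p (Suc n)) (wdiv \<Omega> v)
         + q (Suc n) * E * (bform \<Omega> (u n) (u n) v
              - \<kappa> * ip \<Omega> (\<lambda>x. crossd emb (J n x) (B (Suc n) x)) v) = 0) \<and>
      (\<forall>r. L20 \<Omega> r \<longrightarrow> ip \<Omega> (wdiv \<Omega> (u (Suc n))) r = 0) \<and>
      (\<forall>K. Dsp \<Omega> K \<longrightarrow>
         ip \<Omega> (J (Suc n)) K - ip \<Omega> (\<phi> (Suc n)) (wdiv \<Omega> K)
         - q (Suc n) * E * ip \<Omega> (\<lambda>x. crossd emb (u n x) (B (Suc n) x)) K = 0) \<and>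
      (\<forall>\<psi>. L20 \<Omega> \<psi> \<longrightarrow> ip \<Omega> (wdiv \<Omega> (J (Suc n))) \<psi> = 0) \<and>
      (q (Suc n) - q n) / \<tau> + q (Suc n) / T
         - E * (bform \<Omega> (u n) (u n) (u (Suc n))
                - \<kappa> * ip \<Omega> (\<lambda>x. crossd emb (u n x) (B (Suc n) x)) (J (Suc n))
                - \<kappa> * ip \<Omega> (\<lambda>x. crossd emb (J n x) (B (Suc n) x)) (u (Suc n))) = 0)"

end

theory Submission imports Defs begin

lemma Lp2_sq:
  assumes "Lp 2 \<Omega> (f :: real^'d \<Rightarrow> 'a::real_normed_vector)"
  shows "integrable (lebesgue_on \<Omega>) (\<lambda>x. (norm (f x))\<^sup>2)"
    and "f \<in> borel_measurable (lebesgue_on \<Omega>)"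
proof -
  have "(\<lambda>x. norm (f x) powr 2) = (\<lambda>x. (norm (f x))\<^sup>2)"
    by (rule ext, subst powr_numeral) auto
  then show "integrable (lebesgue_on \<Omega>) (\<lambda>x. (norm (f x))\<^sup>2)" using assms unfolding Lp_def by metis
  show "f \<in> borel_measurable (lebesgue_on \<Omega>)" using assms unfolding Lp_def by blast
qed

lemma nrm2_nonneg[simp]: "0 \<le> nrm2 \<Omega> f"
  unfolding nrm2_def by (rule Bochner_Integration.integral_nonneg) simp

lemma ip_self: "ip \<Omega> f f = nrm2 \<Omega> f"
  unfolding ip_def nrm2_def by (simp add: power2_norm_eq_inner)

lemma ip_comm: "ip \<Omega> f g = ip \<Omega> g f"
  unfolding ip_def by (simp add: inner_commute)

lemma ip_diff_ge:
  fixes a b :: "real^'d \<Rightarrow> real^'d"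
  assumes "Lp 2 \<Omega> a" "Lp 2 \<Omega> b" "\<tau> > 0"
  shows "(nrm2 \<Omega> a - nrm2 \<Omega> b) / (2*\<tau>) \<le> ip \<Omega> (\<lambda>x. (1/\<tau>) *\<^sub>R (a x - b x)) a"
proof -
  note A = Lp2_sq[OF assms(1)] and B = Lp2_sq[OF assms(2)]
  let ?M = "lebesgue_on \<Omega>"
  have iab: "integrable ?M (\<lambda>x. b x \<bullet> a x)"
  proof (rule Bochner_Integration.integrable_bound[of _ "\<lambda>x. (norm (a x))\<^sup>2 + (norm (b x))\<^sup>2"])
    show "integrable ?M (\<lambda>x. (norm (a x))\<^sup>2 + (norm (b x))\<^sup>2)" using A B by simp
    show "(\<lambda>x. b x \<bullet> a x) \<in> borel_measurable ?M" using A B by (simp add: borel_measurable_inner)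
    show "AE x in ?M. norm (b x \<bullet> a x) \<le> norm ((norm (a x))\<^sup>2 + (norm (b x))\<^sup>2)"
    proof (rule AE_I2)
      fix x
      have "\<bar>b x \<bullet> a x\<bar> \<le> norm (b x) * norm (a x)" by (rule Cauchy_Schwarz_ineq2)
      also have "\<dots> \<le> (norm (a x))\<^sup>2 + (norm (b x))\<^sup>2"
        using sum_squares_bound[of "norm (b x)" "norm (a x)"]
          mult_nonneg_nonneg[OF norm_ge_zero norm_ge_zero, of "b x" "a x"] by linarith
      finally show "norm (b x \<bullet> a x) \<le> norm ((norm (a x))\<^sup>2 + (norm (b x))\<^sup>2)" by simp
    qed
  qed
  have eq: "ip \<Omega> (\<lambda>x. (1/\<tau>) *\<^sub>R (a x - b x)) a = (\<integral>x. ((norm (a x))\<^sup>2 - b x \<bullet> a x) / \<tau> \<partial>?M)"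
    unfolding ip_def
    by (rule Bochner_Integration.integral_cong) (auto simp: inner_diff_left power2_norm_eq_inner divide_simps)
  also have "\<dots> = (nrm2 \<Omega> a - (\<integral>x. b x \<bullet> a x \<partial>?M)) / \<tau>"
    unfolding nrm2_def using A iab by simp
  finally have e1: "ip \<Omega> (\<lambda>x. (1/\<tau>) *\<^sub>R (a x - b x)) a = (nrm2 \<Omega> a - (\<integral>x. b x \<bullet> a x \<partial>?M)) / \<tau>" .
  have "(\<integral>x. b x \<bullet> a x \<partial>?M) \<le> (\<integral>x. ((norm (a x))\<^sup>2 + (norm (b x))\<^sup>2)/2 \<partial>?M)"
  proof (rule integral_mono)
    show "integrable ?M (\<lambda>x. ((norm (a x))\<^sup>2 + (norm (b x))\<^sup>2)/2)" using A B by simp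
    show "integrable ?M (\<lambda>x. b x \<bullet> a x)" by (rule iab)
    fix x
    have "0 \<le> (norm (a x - b x))\<^sup>2" by simp
    also have "(norm (a x - b x))\<^sup>2 = (norm (a x))\<^sup>2 + (norm (b x))\<^sup>2 - 2 * (b x \<bullet> a x)"
      by (simp add: power2_norm_eq_inner inner_diff_left inner_diff_right inner_commute)
    finally show "b x \<bullet> a x \<le> ((norm (a x))\<^sup>2 + (norm (b x))\<^sup>2)/2" by simp
  qed
  also have "\<dots> = (nrm2 \<Omega> a + nrm2 \<Omega> b)/2"
    unfolding nrm2_def using A B by simp
  finally have "(\<integral>x. b x \<bullet> a x \<partial>?M) \<le> (nrm2 \<Omega> a + nrm2 \<Omega> b)/2" .
  then show ?thesis unfolding e1 using assms(3) by (simp add: divide_simps)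
qed

lemma step_ineq:
  fixes A G JJ q q' \<tau> T Rey \<kappa> na na' :: real
  assumes "A + G/Rey + \<kappa>*JJ + q'*((q'-q)/\<tau>) + q'*(q'/T) = 0"
    and "(na' - na)/(2*\<tau>) \<le> A" and "\<tau> > 0"
  shows "(na' + q'^2) + 2*\<tau>*((1/Rey)*G + \<kappa>*JJ + (1/T)*q'^2) \<le> na + q^2"
proof -
  have "q'*((q'-q)/\<tau>) \<ge> (q'^2 - q^2)/(2*\<tau>)"
  proof -
    have "q'*(q'-q) - (q'^2-q^2)/2 = (q'-q)^2/2" by (simp add: power2_eq_square field_simps)
    hence "q'*(q'-q) \<ge> (q'^2-q^2)/2" by (smt (verit) zero_le_power2 half_gt_zero_iff divide_nonneg_pos)
    thus ?thesis using assms(3) by (simp add: divide_simps)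
  qed
  hence "(na' - na)/(2*\<tau>) + (q'^2 - q^2)/(2*\<tau>) + (G/Rey + \<kappa>*JJ + q'*(q'/T)) \<le> 0"
    using assms(1,2) by linarith
  hence "((na' - na) + (q'^2 - q^2))/(2*\<tau>) + ((1/Rey)*G + \<kappa>*JJ + (1/T)*q'^2) \<le> 0"
  proof -
    have "q'*(q'/T) = (1/T)*q'^2" by (simp add: power2_eq_square)
    moreover have "G/Rey = (1/Rey)*G" by simp
    moreover have "((na' - na) + (q'^2 - q^2))/(2*\<tau>) = (na' - na)/(2*\<tau>) + (q'^2 - q^2)/(2*\<tau>)"
      by (simp add: add_divide_distrib)
    ultimately show ?thesis using \<open>(na' - na)/(2*\<tau>) + (q'^2 - q^2)/(2*\<tau>) + (G/Rey + \<kappa>*JJ + q'*(q'/T)) \<le> 0\<close> by linarith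
  qed
  hence "2*\<tau>*(((na' - na) + (q'^2 - q^2))/(2*\<tau>) + ((1/Rey)*G + \<kappa>*JJ + (1/T)*q'^2)) \<le> 0"
    using assms(3) by (simp add: mult_nonneg_nonpos)
  hence "((na' - na) + (q'^2 - q^2)) + 2*\<tau>*((1/Rey)*G + \<kappa>*JJ + (1/T)*q'^2) \<le> 0"
  proof -
    have k: "\<And>X Y. 2*\<tau>*(X/(2*\<tau>) + Y) = X + 2*\<tau>*Y" using assms(3) by (simp add: distrib_left)
    show ?thesis using \<open>2 * \<tau> * (_ + _) \<le> 0\<close> unfolding k .
  qed
  thus ?thesis by linarith
qed

lemma combine:
  fixes A G P Q JJ q q' \<tau> T Rey \<kappa> E b c1 c2 :: real
  assumes "A + (1/Rey)*G - P + q'*E*(b - \<kappa>*c1) = 0" "P = 0"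
    "JJ - Q - q'*E*c2 = 0" "Q = 0"
    "(q'-q)/\<tau> + q'/T - E*(b - \<kappa>*c2 - \<kappa>*c1) = 0"
  shows "A + G/Rey + \<kappa>*JJ + q'*((q'-q)/\<tau>) + q'*(q'/T) = 0"
proof -
  have h: "q'*((q'-q)/\<tau> + q'/T - E*(b - \<kappa>*c2 - \<kappa>*c1)) = 0" using assms(5) by simp
  have h3: "\<kappa>*(JJ - Q - q'*E*c2) = 0" using assms(3) by simp
  have "A + G/Rey + \<kappa>*JJ + q'*((q'-q)/\<tau>) + q'*(q'/T)
     = (A + (1/Rey)*G - P + q'*E*(b - \<kappa>*c1)) + P + \<kappa>*(JJ - Q - q'*E*c2) + \<kappa>*Q
       + q'*((q'-q)/\<tau> + q'/T - E*(b - \<kappa>*c2 - \<kappa>*c1))"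
    by (simp add: algebra_simps)
  also have "\<dots> = 0" by (simp only: h h3 assms(1)) (simp add: assms(2,4))
  finally show ?thesis .
qed

theorem mainTheorem6:
  fixes \<Omega> :: "(real^'d) set" and emb :: "'d \<Rightarrow> 3"
    and Rey \<kappa> T :: real
    and u0 J0 :: "real^'d \<Rightarrow> real^'d"
    and B :: "nat \<Rightarrow> nat \<Rightarrow> real^'d \<Rightarrow> real^3"
  assumes "CARD('d) = 2 \<or> CARD('d) = 3"
    and "inj emb"
    and "lipschitz_domain \<Omega>"
    and "Rey > 0" and "\<kappa> > 0" and "T > 0"
    and "Vsp \<Omega> u0" and "Lp 2 \<Omega> J0"
    and "\<And>N n. n \<ge> 1 \<Longrightarrow> Lp 3 \<Omega> (B N n)"
  shows "\<exists>k1 k2. k1 > 0 \<and> k2 > 0 \<and>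
    (\<forall>N u p J \<phi> q. N \<ge> 1 \<longrightarrow> u 0 = u0 \<longrightarrow> J 0 = J0 \<longrightarrow>
       scheme_S1 \<Omega> emb Rey \<kappa> T N (B N) u p J \<phi> q \<longrightarrow>
       (\<forall>m\<le>N. nrm2 \<Omega> (u m) + \<bar>q m\<bar>\<^sup>2 \<le> k1 \<and>
          (T / real N) * (\<Sum>n\<le>m. (1 / Rey) * nrm2 \<Omega> (wjac \<Omega> (u n)) + \<kappa> * nrm2 \<Omega> (J n)
                                  + (1 / T) * \<bar>q n\<bar>\<^sup>2) \<le> k2))"
proof -
  define k1 where "k1 = nrm2 \<Omega> u0 + 1"
  define s0 where "s0 = (1 / Rey) * nrm2 \<Omega> (wjac \<Omega> u0) + \<kappa> * nrm2 \<Omega> J0 + (1 / T) * \<bar>1::real\<bar>\<^sup>2"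
  define k2 where "k2 = k1 / 2 + T * s0 + 1"
  have s0nn: "0 \<le> s0" unfolding s0_def using assms(4,5,6)
    by (intro add_nonneg_nonneg mult_nonneg_nonneg) auto
  have k1pos: "k1 > 0" unfolding k1_def using nrm2_nonneg[of \<Omega> u0] by linarith
  have k2pos: "k2 > 0" unfolding k2_def using k1pos s0nn assms(6) by (simp add: add_pos_nonneg)
  have u0L2: "Lp 2 \<Omega> u0" using assms(7) unfolding Vsp_def Xsp_def H1v_def by blast
  have main: "\<forall>m\<le>N. nrm2 \<Omega> (u m) + \<bar>q m\<bar>\<^sup>2 \<le> k1 \<and>
          (T / real N) * (\<Sum>n\<le>m. (1 / Rey) * nrm2 \<Omega> (wjac \<Omega> (u n)) + \<kappa> * nrm2 \<Omega> (J n)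
                                  + (1 / T) * \<bar>q n\<bar>\<^sup>2) \<le> k2"
    if N1: "N \<ge> 1" and U0: "u 0 = u0" and JJ0: "J 0 = J0"
      and sch: "scheme_S1 \<Omega> emb Rey \<kappa> T N (B N) u p J \<phi> q" for N u p J \<phi> q
  proof -
    define \<tau> where "\<tau> = T / real N"
    have tpos: "\<tau> > 0" unfolding \<tau>_def using N1 assms(6) by simp
    have tle: "\<tau> \<le> T" unfolding \<tau>_def using N1 assms(6)
      by (simp add: divide_le_eq)
    define a where "a n = nrm2 \<Omega> (u n) + \<bar>q n\<bar>\<^sup>2" for n
    define s where "s n = (1 / Rey) * nrm2 \<Omega> (wjac \<Omega> (u n)) + \<kappa> * nrm2 \<Omega> (J n)
                                  + (1 / T) * \<bar>q n\<bar>\<^sup>2" for n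
    have snn: "0 \<le> s n" for n unfolding s_def using assms(4,5,6)
      by (intro add_nonneg_nonneg mult_nonneg_nonneg) auto
    have q0: "q 0 = 1" using sch unfolding scheme_S1_def by blast
    have a0: "a 0 = k1" unfolding a_def k1_def using q0 U0 by simp
    have s0': "s 0 = s0" unfolding s_def s0_def using q0 U0 JJ0 by simp
    have step: "a (Suc n) + 2 * \<tau> * s (Suc n) \<le> a n" if n: "n < N" for n
    proof -
      define E where "E = exp (real (Suc n) * \<tau> / T)"
      have X: "Xsp \<Omega> (u (Suc n))" and Pp: "L20 \<Omega> (p (Suc n))" and Dj: "Dsp \<Omega> (J (Suc n))"
        and Ph: "L20 \<Omega> (\<phi> (Suc n))"
        using sch n unfolding scheme_S1_def Let_def by auto
      have e1: "ip \<Omega> (\<lambda>x. (1 / \<tau>) *\<^sub>R (u (Suc n) x - u n x)) (u (Suc n))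
         + (1 / Rey) * ip \<Omega> (wjac \<Omega> (u (Suc n))) (wjac \<Omega> (u (Suc n)))
         - ip \<Omega> (p (Suc n)) (wdiv \<Omega> (u (Suc n)))
         + q (Suc n) * E * (bform \<Omega> (u n) (u n) (u (Suc n))
              - \<kappa> * ip \<Omega> (\<lambda>x. crossd emb (J n x) (B N (Suc n) x)) (u (Suc n))) = 0"
        using sch n X unfolding scheme_S1_def Let_def \<tau>_def E_def by blast
      have e2: "ip \<Omega> (wdiv \<Omega> (u (Suc n))) (p (Suc n)) = 0"
        using sch n Pp unfolding scheme_S1_def Let_def by blast
      have e3: "ip \<Omega> (J (Suc n)) (J (Suc n)) - ip \<Omega> (\<phi> (Suc n)) (wdiv \<Omega> (J (Suc n)))
         - q (Suc n) * E * ip \<Omega> (\<lambda>x. crossd emb (u n x) (B N (Suc n) x)) (J (Suc n)) = 0"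
        using sch n Dj unfolding scheme_S1_def Let_def \<tau>_def E_def by blast
      have e4: "ip \<Omega> (wdiv \<Omega> (J (Suc n))) (\<phi> (Suc n)) = 0"
        using sch n Ph unfolding scheme_S1_def Let_def by blast
      have e5: "(q (Suc n) - q n) / \<tau> + q (Suc n) / T
         - E * (bform \<Omega> (u n) (u n) (u (Suc n))
                - \<kappa> * ip \<Omega> (\<lambda>x. crossd emb (u n x) (B N (Suc n) x)) (J (Suc n))
                - \<kappa> * ip \<Omega> (\<lambda>x. crossd emb (J n x) (B N (Suc n) x)) (u (Suc n))) = 0"
        using sch n unfolding scheme_S1_def Let_def \<tau>_def E_def by blast
      have comb: "ip \<Omega> (\<lambda>x. (1 / \<tau>) *\<^sub>R (u (Suc n) x - u n x)) (u (Suc n))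
          + nrm2 \<Omega> (wjac \<Omega> (u (Suc n))) / Rey + \<kappa> * nrm2 \<Omega> (J (Suc n))
          + q (Suc n) * ((q (Suc n) - q n) / \<tau>) + q (Suc n) * (q (Suc n) / T) = 0"
        apply (rule combine[OF _ _ _ _ e5])
        using e1 apply (simp only: ip_self)
        using e2 apply (simp add: ip_comm)
        using e3 apply (simp only: ip_self)
        using e4 apply (simp add: ip_comm)
        done
      have L2n: "Lp 2 \<Omega> (u n)"
      proof (cases n)
        case 0 then show ?thesis using U0 u0L2 by simp
      next
        case (Suc k) then show ?thesis using sch n unfolding scheme_S1_def Let_def Xsp_def H1v_def
          by (metis Suc_lessD)
      qed
      have L2s: "Lp 2 \<Omega> (u (Suc n))" using X unfolding Xsp_def H1v_def by blast
      have ge: "(nrm2 \<Omega> (u (Suc n)) - nrm2 \<Omega> (u n)) / (2*\<tau>)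
          \<le> ip \<Omega> (\<lambda>x. (1 / \<tau>) *\<^sub>R (u (Suc n) x - u n x)) (u (Suc n))"
        by (rule ip_diff_ge[OF L2s L2n tpos])
      have "(nrm2 \<Omega> (u (Suc n)) + (q (Suc n))^2) + 2*\<tau>*((1/Rey)*nrm2 \<Omega> (wjac \<Omega> (u (Suc n)))
             + \<kappa>*nrm2 \<Omega> (J (Suc n)) + (1/T)*(q (Suc n))^2) \<le> nrm2 \<Omega> (u n) + (q n)^2"
        by (rule step_ineq[OF comb ge tpos])
      then show ?thesis unfolding a_def s_def by simp
    qed
    have acc: "m \<le> N \<Longrightarrow> a m + 2 * \<tau> * (\<Sum>n\<le>m. s n) \<le> a 0 + 2 * \<tau> * s 0" for m
    proof (induction m)
      case 0 then show ?case by simp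
    next
      case (Suc m)
      then have "a (Suc m) + 2 * \<tau> * s (Suc m) \<le> a m" using step by simp
      moreover have "a m + 2 * \<tau> * (\<Sum>n\<le>m. s n) \<le> a 0 + 2 * \<tau> * s 0" using Suc by simp
      ultimately show ?case by (simp add: distrib_left)
    qed
    show ?thesis
    proof (intro allI impI conjI)
      fix m assume m: "m \<le> N"
      have A: "a m + 2 * \<tau> * (\<Sum>n\<le>m. s n) \<le> k1 + 2 * \<tau> * s0" using acc[OF m] a0 s0' by simp
      have sp: "0 \<le> (\<Sum>n\<le>m. s n)" by (rule sum_nonneg) (rule snn)
      have sm: "s 0 \<le> (\<Sum>n\<le>m. s n)" using snn by (intro member_le_sum) auto
      have am: "a m + 2 * \<tau> * s 0 \<le> k1 + 2 * \<tau> * s0"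
      proof -
        have "2*\<tau>*(s 0) \<le> 2*\<tau>*(\<Sum>n\<le>m. s n)" using sm tpos by (intro mult_left_mono) auto
        thus ?thesis using A by linarith
      qed
      then show "nrm2 \<Omega> (u m) + \<bar>q m\<bar>\<^sup>2 \<le> k1" unfolding a_def using s0' by simp
      have anz: "0 \<le> a m" unfolding a_def using nrm2_nonneg[of \<Omega> "u m"] by simp
      have "2 * (\<tau> * (\<Sum>n\<le>m. s n)) \<le> k1 + 2 * (\<tau> * s0)" using A anz by simp
      moreover have "\<tau> * s0 \<le> T * s0" using tle s0nn by (rule mult_right_mono)
      ultimately have "\<tau> * (\<Sum>n\<le>m. s n) \<le> k2" unfolding k2_def by linarith
      then show "(T / real N) * (\<Sum>n\<le>m. (1 / Rey) * nrm2 \<Omega> (wjac \<Omega> (u n)) + \<kappa> * nrm2 \<Omega> (J n)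
                                  + (1 / T) * \<bar>q n\<bar>\<^sup>2) \<le> k2"
        unfolding \<tau>_def s_def .
    qed
  qed
  show ?thesis
    apply (rule exI[of _ k1], rule exI[of _ k2])
    using k1pos k2pos main by blast
qed

end
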